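(* Let $G$ and $H$ be graphs such that the direct product $G\times H$ is a balanced distance magic graph, and let $\ell$ be a balanced distance magic labeling of $G\times H$ in which $(g,h)$ and $(g',h)$ are twins and $(g,h')$ and $(g'',h')$ are twins, where $g''\neq g'$. Let $\widehat\ell$ be obtained from $\ell$ by exchanging the labels of $(g',h')$ and $(g'',h')$, i.e. $\widehat\ell(g',h')=\ell(g'',h')$, $\widehat\ell(g'',h')=\ell(g',h')$, and $\widehat\ell(a,b)=\ell(a,b)$ for all other vertices. Then $\widehat\ell$ is a balanced distance magic labeling of $G\times H$ in which $(g,h')$ and $(g',h')$ are twins.
   Context: All graphs are finite and simple. For a graph $G$ and vertex $x$, $N(x)=N_G(x)$ is the (open) neighborhood of $x$. A distance magic labeling of a graph $G$ of order $N$ is a bijection $\ell\colon V(G)\to\{1,\dots,N\}$ for which there is a constant $k$ such that the weight $w(x)=\sum_{y\in N(x)}\ell(y)$ equals $k$ for every $x\in V(G)$. A balanced distance magic labeling of a graph $G$ with an even number $N$ of vertices is a distance magic labeling $\ell$ such that for every $w\in V(G)$: whenever $u\in N(w)$ has $\ell(u)=i$, there is $v\in N(w)$ with $\ell(v)=N+1-i$. Under such $\ell$, the vertices labeled $i$ and $N+1-i$ are called twins (with respect to $\ell$). $G$ is a balanced distance magic graph if it has an even number of vertices and admits a balanced distance magic labeling. The direct product $G\times H$ has vertex set $V(G)\times V(H)$, with $(g,h)$ adjacent to $(g',h')$ iff $gg'\in E(G)$ and $hh'\in E(H)$. *)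

theory Defs
  imports Main
begin

definition simple_graph :: "'a set \<Rightarrow> ('a \<Rightarrow> 'a \<Rightarrow> bool) \<Rightarrow> bool" where
  "simple_graph V E \<longleftrightarrow> finite V \<and> (\<forall>x y. E x y \<longrightarrow> x \<in> V \<and> y \<in> V)
     \<and> (\<forall>x y. E x y \<longrightarrow> E y x) \<and> (\<forall>x. \<not> E x x)"

definition nbhd :: "'a set \<Rightarrow> ('a \<Rightarrow> 'a \<Rightarrow> bool) \<Rightarrow> 'a \<Rightarrow> 'a set" where
  "nbhd V E x = {y \<in> V. E x y}"

definition distance_magic_labeling :: "'a set \<Rightarrow> ('a \<Rightarrow> 'a \<Rightarrow> bool) \<Rightarrow> ('a \<Rightarrow> nat) \<Rightarrow> bool" where
  "distance_magic_labeling V E l \<longleftrightarrow> bij_betw l V {1..card V}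
     \<and> (\<exists>k. \<forall>x\<in>V. (\<Sum>y\<in>nbhd V E x. l y) = k)"

definition balanced_dml :: "'a set \<Rightarrow> ('a \<Rightarrow> 'a \<Rightarrow> bool) \<Rightarrow> ('a \<Rightarrow> nat) \<Rightarrow> bool" where
  "balanced_dml V E l \<longleftrightarrow> even (card V) \<and> distance_magic_labeling V E l
     \<and> (\<forall>w\<in>V. \<forall>u\<in>nbhd V E w. \<exists>v\<in>nbhd V E w. l v = card V + 1 - l u)"

definition balanced_dm_graph :: "'a set \<Rightarrow> ('a \<Rightarrow> 'a \<Rightarrow> bool) \<Rightarrow> bool" where
  "balanced_dm_graph V E \<longleftrightarrow> even (card V) \<and> (\<exists>l. balanced_dml V E l)"

definition twins :: "'a set \<Rightarrow> ('a \<Rightarrow> nat) \<Rightarrow> 'a \<Rightarrow> 'a \<Rightarrow> bool" where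
  "twins V l x y \<longleftrightarrow> x \<in> V \<and> y \<in> V \<and> l x + l y = card V + 1"

definition dprod_edge :: "('a \<Rightarrow> 'a \<Rightarrow> bool) \<Rightarrow> ('b \<Rightarrow> 'b \<Rightarrow> bool) \<Rightarrow> 'a \<times> 'b \<Rightarrow> 'a \<times> 'b \<Rightarrow> bool" where
  "dprod_edge EG EH p q \<longleftrightarrow> EG (fst p) (fst q) \<and> EH (snd p) (snd q)"

end

theory Submission
  imports Defs
begin

lemma twin_adj:
  assumes "balanced_dml V E l" "x\<in>V" "y\<in>V" "l x + l y = card V + 1" "w\<in>V" "E w x"
  shows "E w y"
proof -
  have inj: "inj_on l V" using assms(1) unfolding balanced_dml_def distance_magic_labeling_def
    by (auto dest: bij_betw_imp_inj_on)
  have "x \<in> nbhd V E w" using assms unfolding nbhd_def by auto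
  then obtain v where v: "v \<in> nbhd V E w" "l v = card V + 1 - l x"
    using assms(1,5) unfolding balanced_dml_def by blast
  have "l v = l y" using v(2) assms(4) by simp
  moreover have "v \<in> V" using v(1) unfolding nbhd_def by auto
  ultimately have "v = y" using inj assms(3) by (auto dest: inj_onD)
  thus ?thesis using v(1) unfolding nbhd_def by auto
qed

lemma all_nbr:
  assumes "distance_magic_labeling V E l" "finite V" "x\<in>V" "y\<in>V" "E x y" "w\<in>V"
  shows "\<exists>z\<in>V. E w z"
proof (rule ccontr)
  assume nz: "\<not> (\<exists>z\<in>V. E w z)"
  obtain k where k: "\<forall>x\<in>V. (\<Sum>y\<in>nbhd V E x. l y) = k"
    using assms(1) unfolding distance_magic_labeling_def by blast
  have "nbhd V E w = {}" using nz unfolding nbhd_def by auto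
  hence "k = 0" using k assms(6) by force
  have ly: "l y \<ge> 1" using assms(1,4) unfolding distance_magic_labeling_def bij_betw_def by auto
  have fin: "finite (nbhd V E x)" using assms(2) unfolding nbhd_def by auto
  have yin: "y \<in> nbhd V E x" using assms unfolding nbhd_def by auto
  have "l y \<le> (\<Sum>y\<in>nbhd V E x. l y)" using member_le_sum[OF yin _ fin, of l] by simp
  thus False using k assms(3) \<open>k = 0\<close> ly by force
qed

lemma swap_ok:
  assumes "balanced_dml V E l" "p\<in>V" "q\<in>V" "\<forall>w\<in>V. E w p \<longleftrightarrow> E w q"
  shows "balanced_dml V E (l(p:=l q, q:= l p))"
proof -
  define s where "s = (\<lambda>x. if x = p then q else if x = q then p else x)"
  have eq: "l(p:=l q, q:= l p) = l \<circ> s" unfolding s_def by (auto simp: fun_eq_iff)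
  have ss: "\<And>x. s (s x) = x" unfolding s_def by auto
  have sV: "\<And>x. x \<in> V \<Longrightarrow> s x \<in> V" unfolding s_def using assms by auto
  have bs: "bij_betw s V V"
    unfolding bij_betw_def
  proof
    show "inj_on s V" by (metis ss inj_on_def)
    show "s ` V = V"
    proof
      show "s ` V \<subseteq> V" using sV by blast
      show "V \<subseteq> s ` V"
      proof
        fix x assume "x \<in> V"
        hence "s x \<in> V" by (rule sV)
        moreover have "x = s (s x)" using ss by simp
        ultimately show "x \<in> s ` V" by (metis image_eqI)
      qed
    qed
  qed
  have inj: "inj s" by (metis ss injI)
  have nb: "\<And>w. w \<in> V \<Longrightarrow> s ` nbhd V E w = nbhd V E w"
  proof -
    fix w assume w: "w \<in> V"
    have mem: "\<And>x. x \<in> nbhd V E w \<Longrightarrow> s x \<in> nbhd V E w"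
    proof -
      fix x assume x: "x \<in> nbhd V E w"
      hence xV: "x \<in> V" and ex: "E w x" unfolding nbhd_def by auto
      have "E w (s x)"
      proof (cases "x = p")
        case True thus ?thesis using ex assms(4) w unfolding s_def by simp
      next
        case False thus ?thesis using ex assms(4) w unfolding s_def by auto
      qed
      thus "s x \<in> nbhd V E w" using sV[OF xV] unfolding nbhd_def by simp
    qed
    show "s ` nbhd V E w = nbhd V E w"
    proof
      show "s ` nbhd V E w \<subseteq> nbhd V E w" using mem by auto
      show "nbhd V E w \<subseteq> s ` nbhd V E w" proof
        fix x assume "x \<in> nbhd V E w"
        hence "s x \<in> nbhd V E w" by (rule mem)
        moreover have "x = s (s x)" using ss by simp
        ultimately show "x \<in> s ` nbhd V E w" by (metis image_eqI)
      qed
    qed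
  qed
  have A: "even (card V)" and B: "bij_betw l V {1..card V}"
    and C: "\<exists>k. \<forall>x\<in>V. (\<Sum>y\<in>nbhd V E x. l y) = k"
    and D: "\<forall>w\<in>V. \<forall>u\<in>nbhd V E w. \<exists>v\<in>nbhd V E w. l v = card V + 1 - l u"
    using assms(1) unfolding balanced_dml_def distance_magic_labeling_def by auto
  have B': "bij_betw (l \<circ> s) V {1..card V}" using bij_betw_trans[OF bs B] .
  have sumeq: "\<And>w. w \<in> V \<Longrightarrow> (\<Sum>y\<in>nbhd V E w. (l \<circ> s) y) = (\<Sum>y\<in>nbhd V E w. l y)"
  proof -
    fix w assume w: "w \<in> V"
    have "(\<Sum>y\<in>nbhd V E w. l y) = (\<Sum>y\<in>s ` nbhd V E w. l y)" using nb[OF w] by simp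
    also have "\<dots> = (\<Sum>y\<in>nbhd V E w. (l \<circ> s) y)"
      by (rule sum.reindex, rule inj_on_subset[OF inj], simp)
    finally show "(\<Sum>y\<in>nbhd V E w. (l \<circ> s) y) = (\<Sum>y\<in>nbhd V E w. l y)" by simp
  qed
  have C': "\<exists>k. \<forall>x\<in>V. (\<Sum>y\<in>nbhd V E x. (l \<circ> s) y) = k" using C sumeq by simp
  have D': "\<forall>w\<in>V. \<forall>u\<in>nbhd V E w. \<exists>v\<in>nbhd V E w. (l \<circ> s) v = card V + 1 - (l \<circ> s) u"
  proof (intro ballI)
    fix w u assume w: "w \<in> V" and u: "u \<in> nbhd V E w"
    have "s u \<in> nbhd V E w" using nb[OF w] u by blast
    then obtain v where v: "v \<in> nbhd V E w" "l v = card V + 1 - l (s u)" using D w by blast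
    have "s v \<in> nbhd V E w" using nb[OF w] v(1) by blast
    moreover have "(l \<circ> s) (s v) = card V + 1 - (l \<circ> s) u" using v(2) ss by simp
    ultimately show "\<exists>v\<in>nbhd V E w. (l \<circ> s) v = card V + 1 - (l \<circ> s) u" by blast
  qed
  show ?thesis unfolding eq balanced_dml_def distance_magic_labeling_def
    using A B' C' D' by blast
qed

theorem lemma3:
  fixes VG :: "'a set" and EG :: "'a \<Rightarrow> 'a \<Rightarrow> bool"
    and VH :: "'b set" and EH :: "'b \<Rightarrow> 'b \<Rightarrow> bool"
    and l :: "'a \<times> 'b \<Rightarrow> nat"
    and g g' g'' :: 'a and h h' :: 'b
  assumes "simple_graph VG EG" and "simple_graph VH EH"
    and "balanced_dm_graph (VG \<times> VH) (dprod_edge EG EH)"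
    and "balanced_dml (VG \<times> VH) (dprod_edge EG EH) l"
    and "twins (VG \<times> VH) l (g, h) (g', h)"
    and "twins (VG \<times> VH) l (g, h') (g'', h')"
    and "g'' \<noteq> g'"
  shows "balanced_dml (VG \<times> VH) (dprod_edge EG EH)
           (l((g', h') := l (g'', h'), (g'', h') := l (g', h')))
       \<and> twins (VG \<times> VH) (l((g', h') := l (g'', h'), (g'', h') := l (g', h'))) (g, h') (g', h')"
proof -
  let ?V = "VG \<times> VH" and ?E = "dprod_edge EG EH"
  have G: "finite VG" "\<And>x y. EG x y \<Longrightarrow> x \<in> VG \<and> y \<in> VG" "\<And>x y. EG x y \<Longrightarrow> EG y x"
    using assms(1) unfolding simple_graph_def by auto
  have H: "finite VH" "\<And>x y. EH x y \<Longrightarrow> x \<in> VH \<and> y \<in> VH" "\<And>x y. EH x y \<Longrightarrow> EH y x"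
    using assms(2) unfolding simple_graph_def by auto
  have fin: "finite ?V" using G(1) H(1) by simp
  have dml: "distance_magic_labeling ?V ?E l" and ev: "even (card ?V)"
    using assms(4) unfolding balanced_dml_def by auto
  have t1: "(g,h) \<in> ?V" "(g',h) \<in> ?V" "l (g,h) + l (g',h) = card ?V + 1"
    using assms(5) unfolding twins_def by auto
  have t2: "(g,h') \<in> ?V" "(g'',h') \<in> ?V" "l (g,h') + l (g'',h') = card ?V + 1"
    using assms(6) unfolding twins_def by auto
  have edgeV: "\<And>x y. ?E x y \<Longrightarrow> x \<in> ?V \<and> y \<in> ?V"
    unfolding dprod_edge_def using G(2) H(2) by (auto simp: mem_Times_iff)
  have symE: "\<And>x y. ?E x y \<Longrightarrow> ?E y x" unfolding dprod_edge_def using G(3) H(3) by auto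
  have AB: "\<And>w. ?E w (g,h) \<longleftrightarrow> ?E w (g',h)"
  proof -
    fix w
    have "w \<in> ?V \<Longrightarrow> l (g',h) + l (g,h) = card ?V + 1" using t1 by simp
    thus "?E w (g,h) \<longleftrightarrow> ?E w (g',h)"
      using twin_adj[OF assms(4) t1(1,2,3)] twin_adj[OF assms(4) t1(2,1)] edgeV by blast
  qed
  have CD: "\<And>w. ?E w (g,h') \<longleftrightarrow> ?E w (g'',h')"
  proof -
    fix w
    have "w \<in> ?V \<Longrightarrow> l (g'',h') + l (g,h') = card ?V + 1" using t2 by simp
    thus "?E w (g,h') \<longleftrightarrow> ?E w (g'',h')"
      using twin_adj[OF assms(4) t2(1,2,3)] twin_adj[OF assms(4) t2(2,1)] edgeV by blast
  qed
  have p: "(g',h') \<in> ?V" using t1 t2 by auto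
  have key: "\<forall>w\<in>?V. ?E w (g',h') \<longleftrightarrow> ?E w (g'',h')"
  proof (intro ballI iffI)
    fix w assume w: "w \<in> ?V"
    {
      fix q assume q: "q \<in> ?V" "?E w q"
      then obtain z where z: "z \<in> ?V" "?E (g,h) z" using all_nbr[OF dml fin w q(1)] t1(1)
        by (metis edgeV)
      hence "EH h (snd z)" unfolding dprod_edge_def by simp
      hence "\<exists>b. EH b h" using H(3) by blast
    } note nb = this
    {
      assume e: "?E w (g',h')"
      obtain b where b: "EH b h" using nb[OF p e] by blast
      have "?E (fst w, b) (g',h)" using e b unfolding dprod_edge_def by simp
      hence "?E (fst w, b) (g,h)" using AB[of "(fst w, b)"] by blast
      hence "EG (fst w) g" unfolding dprod_edge_def by simp
      hence "?E w (g,h')" using e unfolding dprod_edge_def by simp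
      thus "?E w (g'',h')" using CD by blast
    }
    {
      assume e: "?E w (g'',h')"
      obtain b where b: "EH b h" using nb[OF t2(2) e] by blast
      have "?E w (g,h')" using e CD by blast
      hence "EG (fst w) g" unfolding dprod_edge_def by simp
      hence "?E (fst w, b) (g,h)" using b unfolding dprod_edge_def by simp
      hence "?E (fst w, b) (g',h)" using AB[of "(fst w, b)"] by blast
      hence "EG (fst w) g'" unfolding dprod_edge_def by simp
      thus "?E w (g',h')" using e unfolding dprod_edge_def by simp
    }
  qed
  have part1: "balanced_dml ?V ?E (l((g', h') := l (g'', h'), (g'', h') := l (g', h')))"
    using swap_ok[OF assms(4) p t2(2) key] .
  have gg: "g \<noteq> g'" using t1(3) ev by (metis add_self_div_2 even_add odd_one)
  have gg2: "g \<noteq> g''" using t2(3) ev by (metis add_self_div_2 even_add odd_one)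
  have "twins ?V (l((g', h') := l (g'', h'), (g'', h') := l (g', h'))) (g, h') (g', h')"
    unfolding twins_def using gg gg2 assms(7) t2 p by auto
  thus ?thesis using part1 by blast
qed

end
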